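(* Let $\vartheta$ be a primitive semi-compatible random substitution with PF eigenvalue $\lambda$ and normalised right PF eigenvector $\bm R$, let $K=\max_i\ell_{1,i}$, $I_N=\vartheta(\mathcal L)\cap\mathcal L_N$, and for $\varepsilon>0$ put $\lambda^\pm_\varepsilon=\lambda\pm\varepsilon nK$. For every $\varepsilon>0$ with $\lambda>\varepsilon nK$ there is $N_0$ such that for all $N\geqslant N_0$, \[ \#I_N\;\leqslant\;N\Bigl(\frac{1}{\lambda^-_\varepsilon}-\frac{1}{\lambda^+_\varepsilon}\Bigr)\bigl(\#\mathcal L_{\lfloor N/\lambda^-_\varepsilon\rfloor}\bigr)\prod_{i=1}^n(\#\vartheta(a_i))^{(R_i+\varepsilon)N/\lambda^-_\varepsilon}. \]
   Context: Let $\mathcal A=\{a_1,\dots,a_n\}$ be a finite alphabet ($n=\#\mathcal A$), $\mathcal A^+$ the finite non-empty words over $\mathcal A$. A random substitution is a map $\vartheta$ from $\mathcal A$ to finite non-empty subsets of $\mathcal A^+$, extended to words by $\vartheta(u_1\cdots u_m)=\{w_1\cdots w_m: w_k\in\vartheta(u_k)\}$ and to sets of words by unions. $|u|$ is the length and $|u|_a$ the number of occurrences of letter $a$ in $u$; $\Phi(u)=(|u|_{a_1},\dots,|u|_{a_n})^\intercal$. $\vartheta$ is semi-compatible if for each $a$ all words in $\vartheta(a)$ have the same $\Phi$; then all words in $\vartheta(a_i)$ have common length $\ell_{1,i}$. Substitution matrix: $M_{ij}=|u|_{a_i}$, $u\in\vartheta(a_j)$; primitive means $M$ primitive, with Perron–Frobenius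 eigenvalue $\lambda$ and right PF eigenvector $\bm R=(R_1,\dots,R_n)^\intercal$, $\|\bm R\|_1=1$. The language $\mathcal L$ is the set of all subwords of words in $\vartheta^m(a)$, $a\in\mathcal A$, $m\in\mathbb N$, and $\mathcal L_\ell=\{v\in\mathcal L:|v|=\ell\}$. *)

theory Defs
  imports Complex_Main
begin

definition random_subst :: "('a \<Rightarrow> 'a list set) \<Rightarrow> bool" where
  "random_subst \<theta> \<longleftrightarrow> (\<forall>a. finite (\<theta> a) \<and> \<theta> a \<noteq> {} \<and> [] \<notin> \<theta> a)"

definition semi_compatible :: "('a \<Rightarrow> 'a list set) \<Rightarrow> bool" where
  "semi_compatible \<theta> \<longleftrightarrow>
     (\<forall>a u v b. u \<in> \<theta> a \<longrightarrow> v \<in> \<theta> a \<longrightarrow> count_list u b = count_list v b)"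

definition subst_word :: "('a \<Rightarrow> 'a list set) \<Rightarrow> 'a list \<Rightarrow> 'a list set" where
  "subst_word \<theta> u = concat ` listset (map \<theta> u)"

definition subst_set :: "('a \<Rightarrow> 'a list set) \<Rightarrow> 'a list set \<Rightarrow> 'a list set" where
  "subst_set \<theta> W = (\<Union>w\<in>W. subst_word \<theta> w)"

fun subst_pow :: "('a \<Rightarrow> 'a list set) \<Rightarrow> nat \<Rightarrow> 'a \<Rightarrow> 'a list set" where
  "subst_pow \<theta> 0 a = {[a]}"
| "subst_pow \<theta> (Suc m) a = subst_set \<theta> (subst_pow \<theta> m a)"

definition subst_matrix :: "('a \<Rightarrow> 'a list set) \<Rightarrow> 'a \<Rightarrow> 'a \<Rightarrow> nat" where
  "subst_matrix \<theta> i j = count_list (SOME u. u \<in> \<theta> j) i"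

definition subst_len :: "('a \<Rightarrow> 'a list set) \<Rightarrow> 'a \<Rightarrow> nat" where
  "subst_len \<theta> a = length (SOME u. u \<in> \<theta> a)"

fun mat_pow :: "('a::finite \<Rightarrow> 'a \<Rightarrow> nat) \<Rightarrow> nat \<Rightarrow> 'a \<Rightarrow> 'a \<Rightarrow> nat" where
  "mat_pow M 0 i j = (if i = j then 1 else 0)"
| "mat_pow M (Suc k) i j = (\<Sum>l\<in>UNIV. mat_pow M k i l * M l j)"

definition primitive_mat :: "('a::finite \<Rightarrow> 'a \<Rightarrow> nat) \<Rightarrow> bool" where
  "primitive_mat M \<longleftrightarrow> (\<exists>k>0. \<forall>i j. mat_pow M k i j > 0)"

definition subst_lang :: "('a \<Rightarrow> 'a list set) \<Rightarrow> 'a list set" where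
  "subst_lang \<theta> = {v. v \<noteq> [] \<and> (\<exists>a m w p s. w \<in> subst_pow \<theta> m a \<and> w = p @ v @ s)}"

definition lang_len :: "('a \<Rightarrow> 'a list set) \<Rightarrow> nat \<Rightarrow> 'a list set" where
  "lang_len \<theta> l = {v \<in> subst_lang \<theta>. length v = l}"

end

theory Submission
  imports Defs
begin



lemma in_listset_iff: "xs \<in> listset As \<longleftrightarrow> list_all2 (\<in>) xs As"
proof (induction As arbitrary: xs)
  case Nil then show ?case by simp
next
  case (Cons A As) then show ?case
    by (cases xs) (auto simp: set_Cons_def)
qed

lemma sw_iff: "v \<in> subst_word \<theta> u \<longleftrightarrow> (\<exists>vs. list_all2 (\<lambda>v c. v \<in> \<theta> c) vs u \<and> v = concat vs)"
  unfolding subst_word_def by (auto simp: in_listset_iff list_all2_map2)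

lemma sw_Nil[simp]: "subst_word \<theta> [] = {[]}"
  by (simp add: subst_word_def)

lemma sw_append: "v \<in> subst_word \<theta> (u1 @ u2) \<longleftrightarrow> (\<exists>v1 v2. v = v1 @ v2 \<and> v1 \<in> subst_word \<theta> u1 \<and> v2 \<in> subst_word \<theta> u2)"
proof
  assume "v \<in> subst_word \<theta> (u1 @ u2)"
  then obtain vs where vs: "list_all2 (\<lambda>v c. v \<in> \<theta> c) vs (u1 @ u2)" "v = concat vs"
    by (auto simp: sw_iff)
  then obtain vs1 vs2 where "vs = vs1 @ vs2" "list_all2 (\<lambda>v c. v \<in> \<theta> c) vs1 u1" "list_all2 (\<lambda>v c. v \<in> \<theta> c) vs2 u2"
    by (auto simp: list_all2_append2)
  then show "\<exists>v1 v2. v = v1 @ v2 \<and> v1 \<in> subst_word \<theta> u1 \<and> v2 \<in> subst_word \<theta> u2"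
    using vs by (auto simp: sw_iff)
next
  assume "\<exists>v1 v2. v = v1 @ v2 \<and> v1 \<in> subst_word \<theta> u1 \<and> v2 \<in> subst_word \<theta> u2"
  then obtain vs1 vs2 where "list_all2 (\<lambda>v c. v \<in> \<theta> c) vs1 u1" "list_all2 (\<lambda>v c. v \<in> \<theta> c) vs2 u2"
     "v = concat vs1 @ concat vs2" by (auto simp: sw_iff)
  then show "v \<in> subst_word \<theta> (u1 @ u2)"
    by (auto simp: sw_iff intro!: exI[of _ "vs1 @ vs2"] list_all2_appendI)
qed

lemma sw_Cons: "v \<in> subst_word \<theta> (c # u) \<longleftrightarrow> (\<exists>v1 v2. v = v1 @ v2 \<and> v1 \<in> \<theta> c \<and> v2 \<in> subst_word \<theta> u)"
proof -
  have "subst_word \<theta> [c] = \<theta> c"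
  proof (rule set_eqI)
    fix v show "v \<in> subst_word \<theta> [c] \<longleftrightarrow> v \<in> \<theta> c"
      unfolding sw_iff by (auto simp: list_all2_Cons2)
  qed
  then show ?thesis using sw_append[of v \<theta> "[c]" u] by simp
qed

lemma sw_concat: "v \<in> subst_word \<theta> (concat xs) \<longleftrightarrow> (\<exists>vs. list_all2 (\<lambda>v x. v \<in> subst_word \<theta> x) vs xs \<and> v = concat vs)"
proof (induction xs arbitrary: v)
  case Nil then show ?case by simp
next
  case (Cons x xs)
  show ?case
  proof
    assume "v \<in> subst_word \<theta> (concat (x # xs))"
    then have "v \<in> subst_word \<theta> (x @ concat xs)" by simp
    then obtain v1 v2 where a: "v = v1 @ v2" "v1 \<in> subst_word \<theta> x" "v2 \<in> subst_word \<theta> (concat xs)"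
      unfolding sw_append by blast
    from a(3) obtain vs where "list_all2 (\<lambda>v x. v \<in> subst_word \<theta> x) vs xs" "v2 = concat vs"
      using Cons.IH by blast
    then show "\<exists>vs. list_all2 (\<lambda>v x. v \<in> subst_word \<theta> x) vs (x # xs) \<and> v = concat vs"
      using a by (intro exI[of _ "v1 # vs"]) simp
  next
    assume "\<exists>vs. list_all2 (\<lambda>v x. v \<in> subst_word \<theta> x) vs (x # xs) \<and> v = concat vs"
    then obtain v1 vs where b: "v1 \<in> subst_word \<theta> x" "list_all2 (\<lambda>v x. v \<in> subst_word \<theta> x) vs xs" "v = v1 @ concat vs"
      by (auto simp: list_all2_Cons2)
    then have "concat vs \<in> subst_word \<theta> (concat xs)" using Cons.IH by blast
    then show "v \<in> subst_word \<theta> (concat (x # xs))"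
      using b unfolding concat.simps sw_append by blast
  qed
qed




definition mulM :: "('a::finite \<Rightarrow> 'a list set) \<Rightarrow> ('a \<Rightarrow> real) \<Rightarrow> 'a \<Rightarrow> real" where
  "mulM \<theta> x = (\<lambda>i. \<Sum>j\<in>UNIV. real (subst_matrix \<theta> i j) * x j)"

definition ev :: "'a \<Rightarrow> 'a \<Rightarrow> real" where "ev b = (\<lambda>j. if j = b then 1 else 0)"

lemma sw_single: "subst_word \<theta> [c] = \<theta> c"
proof (rule set_eqI)
  fix v show "v \<in> subst_word \<theta> [c] \<longleftrightarrow> v \<in> \<theta> c"
    unfolding sw_iff by (auto simp: list_all2_Cons2)
qed

lemma pow_one: "subst_pow \<theta> (Suc 0) b = \<theta> b"
  by (simp add: subst_set_def sw_single)

lemma length_sum_count: "length (xs::'a::finite list) = (\<Sum>i\<in>UNIV. count_list xs i)"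
  using sum_count_set[of xs UNIV] by simp

locale RS =
  fixes th :: "'a::finite \<Rightarrow> 'a list set"
  assumes rs: "random_subst th" and sc: "semi_compatible th"
begin

abbreviation "M \<equiv> subst_matrix th"
abbreviation "ell \<equiv> subst_len th"
abbreviation "K \<equiv> Max (range ell)"

lemma th_fin: "finite (th a)" and th_ne: "th a \<noteq> {}" and th_nil: "[] \<notin> th a"
  using rs by (auto simp: random_subst_def)

lemma some_in: "(SOME u. u \<in> th c) \<in> th c"
  using th_ne by (simp add: some_in_eq)

lemma th_count: "u \<in> th c \<Longrightarrow> count_list u i = M i c"
  using sc some_in unfolding semi_compatible_def subst_matrix_def by blast

lemma th_len: "u \<in> th c \<Longrightarrow> length u = ell c"
proof -
  assume u: "u \<in> th c"
  have "length u = (\<Sum>i\<in>UNIV. count_list u i)" by (rule length_sum_count)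
  also have "\<dots> = (\<Sum>i\<in>UNIV. count_list (SOME u. u \<in> th c) i)"
    using th_count[OF u] th_count[OF some_in] by simp
  also have "\<dots> = ell c" by (simp add: subst_len_def length_sum_count)
  finally show ?thesis .
qed

lemma ell_pos: "ell c \<ge> 1"
  using th_len[OF some_in] th_nil[of c] some_in[of c]
  by (metis One_nat_def Suc_leI length_greater_0_conv)

lemma ell_le_K: "ell c \<le> K"
  by (simp add: Max_ge)

lemma K_ge1: "K \<ge> 1"
  using ell_pos ell_le_K le_trans by blast

lemma ell_sum: "ell c = (\<Sum>i\<in>UNIV. M i c)"
  using th_len[OF some_in] length_sum_count[of "SOME u. u \<in> th c"] th_count[OF some_in] by simp

lemma sw_count: "v \<in> subst_word th u \<Longrightarrow> count_list v i = sum_list (map (\<lambda>c. M i c) u)"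
proof (induction u arbitrary: v)
  case Nil then show ?case by simp
next
  case (Cons c u) then show ?case
    by (auto simp: sw_Cons th_count)
qed

lemma sw_count2: "v \<in> subst_word th u \<Longrightarrow> count_list v i = (\<Sum>j\<in>UNIV. count_list u j * M i j)"
  using sw_count sum_list_map_eq_sum_count2[of u UNIV] by simp

lemma sw_len: "v \<in> subst_word th u \<Longrightarrow> length v = sum_list (map ell u)"
proof (induction u arbitrary: v)
  case Nil then show ?case by simp
next
  case (Cons c u) then show ?case
    by (auto simp: sw_Cons th_len)
qed

lemma sw_len2: "v \<in> subst_word th u \<Longrightarrow> length v = (\<Sum>j\<in>UNIV. count_list u j * ell j)"
  using sw_len sum_list_map_eq_sum_count2[of u UNIV] by simp

lemma sw_len_le: "v \<in> subst_word th u \<Longrightarrow> length v \<le> K * length u"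
proof (induction u arbitrary: v)
  case Nil then show ?case by simp
next
  case (Cons c u)
  then obtain v1 v2 where "v = v1 @ v2" "v1 \<in> th c" "v2 \<in> subst_word th u" by (auto simp: sw_Cons)
  then have "length v = ell c + length v2" using th_len[of v1 c] by simp
  moreover have "length v2 \<le> K * length u" using Cons.IH[OF \<open>v2 \<in> subst_word th u\<close>] .
  moreover have "K * length (c # u) = K + K * length u" by simp
  ultimately show ?case using ell_le_K[of c] by linarith
qed

lemma sw_len_ge: "v \<in> subst_word th u \<Longrightarrow> length v \<ge> length u"
proof (induction u arbitrary: v)
  case Nil then show ?case by simp
next
  case (Cons c u) then show ?case
    using ell_pos[of c] by (fastforce simp: sw_Cons th_len)
qed

lemma sw_fin_card: "finite (subst_word th u) \<and> card (subst_word th u) \<le> prod_list (map (\<lambda>c. card (th c)) u)"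
proof (induction u)
  case Nil then show ?case by simp
next
  case (Cons c u)
  have eq: "subst_word th (c # u) = (\<lambda>(a, b). a @ b) ` (th c \<times> subst_word th u)"
  proof (rule set_eqI)
    fix v show "v \<in> subst_word th (c # u) \<longleftrightarrow> v \<in> (\<lambda>(a, b). a @ b) ` (th c \<times> subst_word th u)"
      unfolding sw_Cons by (auto simp: image_iff)
  qed
  have f: "finite (th c \<times> subst_word th u)" using Cons th_fin by blast
  have "card (subst_word th (c # u)) \<le> card (th c \<times> subst_word th u)"
    unfolding eq by (rule card_image_le[OF f])
  also have "\<dots> = card (th c) * card (subst_word th u)" by (simp add: card_cartesian_product)
  also have "\<dots> \<le> card (th c) * prod_list (map (\<lambda>c. card (th c)) u)"
    using Cons by simp
  finally show ?case using f eq by simp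
qed

lemma sw_ne: "subst_word th u \<noteq> {}"
proof (induction u)
  case Nil then show ?case by simp
next
  case (Cons c u)
  obtain x y where "x \<in> th c" "y \<in> subst_word th u" using th_ne[of c] Cons by blast
  then have "x @ y \<in> subst_word th (c # u)" by (auto simp: sw_Cons)
  then show ?case by blast
qed

lemma pow_ne: "subst_pow th m b \<noteq> {}"
  by (induction m) (auto simp: subst_set_def sw_ne)

lemma pow_len_ge: "w \<in> subst_pow th m b \<Longrightarrow> length w \<ge> 1"
proof (induction m arbitrary: w)
  case 0 then show ?case by simp
next
  case (Suc m) then show ?case
    using sw_len_ge by (fastforce simp: subst_set_def)
qed

lemma pow_len_le: "w \<in> subst_pow th m b \<Longrightarrow> length w \<le> K ^ m"
proof (induction m arbitrary: w)
  case 0 then show ?case by simp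
next
  case (Suc m)
  then obtain w' where w': "w' \<in> subst_pow th m b" "w \<in> subst_word th w'"
    by (auto simp: subst_set_def)
  have "length w \<le> K * length w'" by (rule sw_len_le[OF w'(2)])
  also have "\<dots> \<le> K * K ^ m" using Suc.IH[OF w'(1)] by simp
  finally show ?case by simp
qed

lemma pow_count: "w \<in> subst_pow th m b \<Longrightarrow> real (count_list w i) = ((mulM th ^^ m) (ev b)) i"
proof (induction m arbitrary: w i)
  case 0 then show ?case by (simp add: ev_def)
next
  case (Suc m)
  then obtain w' where w': "w' \<in> subst_pow th m b" "w \<in> subst_word th w'"
    by (auto simp: subst_set_def)
  have "real (count_list w i) = (\<Sum>j\<in>UNIV. real (count_list w' j) * real (M i j))"
    using sw_count2[OF w'(2)] by simp
  also have "\<dots> = (\<Sum>j\<in>UNIV. real (M i j) * ((mulM th ^^ m) (ev b)) j)"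
    using Suc.IH[OF w'(1)] by (simp add: mult.commute)
  also have "\<dots> = mulM th ((mulM th ^^ m) (ev b)) i" by (simp only: mulM_def)
  finally show ?case by simp
qed

lemma decomp: "w \<in> subst_pow th (j + k) a \<Longrightarrow>
   \<exists>ws. w = concat ws \<and> (\<forall>x\<in>set ws. \<exists>b. x \<in> subst_pow th k b)"
proof (induction k arbitrary: w)
  case 0
  show ?case by (intro exI[of _ "map (\<lambda>c. [c]) w"]) (auto simp: concat_map_singleton)
next
  case (Suc k)
  then obtain w' where w': "w' \<in> subst_pow th (j + k) a" "w \<in> subst_word th w'"
    by (auto simp: subst_set_def)
  obtain ws' where ws': "w' = concat ws'" "\<forall>x\<in>set ws'. \<exists>b. x \<in> subst_pow th k b"
    using Suc.IH[OF w'(1)] by blast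
  obtain vs where vs: "list_all2 (\<lambda>v x. v \<in> subst_word th x) vs ws'" "w = concat vs"
    using w'(2) ws'(1) sw_concat by blast
  have "\<forall>x\<in>set vs. \<exists>b. x \<in> subst_pow th (Suc k) b"
  proof
    fix x assume "x \<in> set vs"
    then obtain i where i: "i < length vs" "x = vs ! i" by (metis in_set_conv_nth)
    have li: "length vs = length ws'" using vs(1) list_all2_lengthD by blast
    have "x \<in> subst_word th (ws' ! i)" using vs(1) i list_all2_nthD by blast
    moreover obtain b where "ws' ! i \<in> subst_pow th k b" using ws'(2) i li nth_mem by metis
    ultimately show "\<exists>b. x \<in> subst_pow th (Suc k) b" by (auto simp: subst_set_def)
  qed
  then show ?case using vs by blast
qed

lemma list_all2_choice: "list_all2 (\<lambda>v c. \<exists>v'. P v' c \<and> Q v v') vs us \<Longrightarrow>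
   \<exists>vs'. list_all2 P vs' us \<and> list_all2 Q vs vs'"
proof (induction vs arbitrary: us)
  case Nil then show ?case by simp
next
  case (Cons v vs)
  then obtain c us' where us: "us = c # us'" by (cases us) auto
  with Cons.prems obtain v' where "P v' c" "Q v v'" "list_all2 (\<lambda>v c. \<exists>v'. P v' c \<and> Q v v') vs us'" by auto
  with Cons.IH show ?case using us by (metis list_all2_Cons)
qed

lemma sw_concat_intro: "list_all2 (\<lambda>v x. v \<in> subst_word th x) vs xs \<Longrightarrow> concat vs \<in> subst_word th (concat xs)"
  using sw_concat by blast

lemma constr: "w1 \<in> subst_pow th k b \<Longrightarrow> list_all2 (\<lambda>v c. v \<in> subst_pow th m c) vs w1 \<Longrightarrow>
   concat vs \<in> subst_pow th (k + m) b"
proof (induction m arbitrary: vs)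
  case 0
  from 0(2) have "vs = map (\<lambda>c. [c]) w1"
    by (induction vs w1 rule: list_all2_induct) auto
  then show ?case using 0 by (simp add: concat_map_singleton)
next
  case (Suc m)
  have "\<forall>i<length w1. \<exists>v'. v' \<in> subst_pow th m (w1!i) \<and> vs!i \<in> subst_word th v'"
  proof (intro allI impI)
    fix i assume "i < length w1"
    then have "vs!i \<in> subst_pow th (Suc m) (w1!i)" using Suc.prems(2) list_all2_nthD2 by blast
    then show "\<exists>v'. v' \<in> subst_pow th m (w1!i) \<and> vs!i \<in> subst_word th v'"
      unfolding subst_pow.simps subst_set_def by blast
  qed
  then have L: "list_all2 (\<lambda>v c. \<exists>v'. v' \<in> subst_pow th m c \<and> v \<in> subst_word th v') vs w1"
    using list_all2_lengthD[OF Suc.prems(2)] by (intro list_all2_all_nthI) auto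
  obtain vs' where vs': "list_all2 (\<lambda>v' c. v' \<in> subst_pow th m c) vs' w1"
     "list_all2 (\<lambda>v v'. v \<in> subst_word th v') vs vs'"
    using list_all2_choice[where P="\<lambda>v' c. v' \<in> subst_pow th m c" and Q="\<lambda>v v'. v \<in> subst_word th v'", OF L]
    by (elim exE conjE)
  have "concat vs' \<in> subst_pow th (k + m) b" using Suc.IH[OF Suc.prems(1) vs'(1)] .
  moreover have "concat vs \<in> subst_word th (concat vs')" using sw_concat_intro[OF vs'(2)] .
  ultimately have "concat vs \<in> subst_pow th (Suc (k + m)) b"
    unfolding subst_pow.simps subst_set_def by blast
  then show ?case by simp
qed

end



definition zmx :: "('a::finite \<Rightarrow> real) \<Rightarrow> ('a \<Rightarrow> real) \<Rightarrow> real" where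
  "zmx R x = Max (range (\<lambda>i. x i / R i))"
definition zmn :: "('a::finite \<Rightarrow> real) \<Rightarrow> ('a \<Rightarrow> real) \<Rightarrow> real" where
  "zmn R x = Min (range (\<lambda>i. x i / R i))"

lemma zmx_ge: "x i / R i \<le> zmx R x"
  unfolding zmx_def by (rule Max_ge) auto
lemma zmn_le: "zmn R x \<le> x i / R i"
  unfolding zmn_def by (rule Min_le) auto
lemma zmx_le_iff: "zmx R x \<le> t \<longleftrightarrow> (\<forall>i. x i / R i \<le> t)"
  unfolding zmx_def by (subst Max_le_iff) auto
lemma zmn_ge_iff: "t \<le> zmn R x \<longleftrightarrow> (\<forall>i. t \<le> x i / R i)"
  unfolding zmn_def by (subst Min_ge_iff) auto
lemma zmx_ex: "\<exists>i. zmx R x = x i / R i"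
proof -
  have "zmx R x \<in> range (\<lambda>i. x i / R i)" unfolding zmx_def by (rule Max_in) auto
  then show ?thesis by auto
qed
lemma zmn_ex: "\<exists>i. zmn R x = x i / R i"
proof -
  have "zmn R x \<in> range (\<lambda>i. x i / R i)" unfolding zmn_def by (rule Min_in) auto
  then show ?thesis by auto
qed

locale posvec =
  fixes R :: "'a::finite \<Rightarrow> real"
  assumes R_pos: "\<forall>i. R i > 0" and R_norm: "(\<Sum>i\<in>UNIV. R i) = 1"
begin

lemma R_le1: "R i \<le> 1"
proof -
  have "R i \<le> (\<Sum>i\<in>UNIV. R i)" by (rule member_le_sum) (use R_pos less_imp_le in auto)
  then show ?thesis using R_norm by simp
qed

lemma wsum: "(\<Sum>j\<in>UNIV. A i j * x j) / R i = (\<Sum>j\<in>UNIV. (A i j * R j / R i) * (x j / R j))"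
  using R_pos by (simp add: sum_divide_distrib) (metis (no_types, lifting) less_irrefl)

lemma contr:
  fixes A :: "'a \<Rightarrow> 'a \<Rightarrow> real" and x :: "'a \<Rightarrow> real"
  assumes Ac: "\<forall>i j. A i j \<ge> c" and c0: "c \<ge> 0"
    and Aeig: "\<forall>i. (\<Sum>j\<in>UNIV. A i j * R j) = \<mu> * R i"
    and x0: "\<forall>j. x j \<ge> 0"
  defines "y \<equiv> (\<lambda>i. \<Sum>j\<in>UNIV. A i j * x j)"
  shows "zmx R y \<le> \<mu> * zmx R x" "\<mu> * zmn R x \<le> zmn R y" "c * (\<Sum>j\<in>UNIV. x j) \<le> zmn R y"
    "zmx R y - zmn R y \<le> (\<mu> - c) * (zmx R x - zmn R x)"
proof -
  define w where "w i j = A i j * R j / R i" for i j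
  define z where "z j = x j / R j" for j
  have yz: "y i / R i = (\<Sum>j\<in>UNIV. w i j * z j)" for i
    unfolding y_def w_def z_def by (rule wsum)
  have wsum1: "(\<Sum>j\<in>UNIV. w i j) = \<mu>" for i
  proof -
    have "(\<Sum>j\<in>UNIV. w i j) = (\<Sum>j\<in>UNIV. A i j * R j) / R i"
      unfolding w_def by (simp add: sum_divide_distrib)
    then show ?thesis using Aeig R_pos by (metis less_irrefl nonzero_mult_div_cancel_right)
  qed
  have w0: "w i j \<ge> c * R j" for i j
  proof -
    have "0 \<le> A i j" using Ac c0 by (meson order_trans)
    then have nn: "0 \<le> A i j * R j" using R_pos[rule_format, of j] by simp
    have "A i j * R j * R i \<le> A i j * R j"
      using mult_right_le_one_le[OF nn] R_le1[of i] R_pos less_imp_le by blast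
    then have "A i j * R j / R i \<ge> A i j * R j" using R_pos by (simp add: le_divide_eq)
    moreover have "A i j * R j \<ge> c * R j" using Ac R_pos by (simp add: less_imp_le mult_right_mono)
    ultimately show ?thesis unfolding w_def by linarith
  qed
  have wnn: "w i j \<ge> 0" for i j
  proof -
    have "c * R j \<ge> 0" using c0 R_pos[rule_format, of j] by simp
    then show ?thesis using w0[where i=i and j=j] by linarith
  qed
  have zlo: "zmn R x \<le> z j" and zhi: "z j \<le> zmx R x" for j unfolding z_def by (rule zmn_le, rule zmx_ge)
  have wM: "(\<Sum>j\<in>UNIV. w i j * t) = \<mu> * t" for i t
    using sum_distrib_right[of "w i" UNIV t] wsum1[of i] by simp
  show "zmx R y \<le> \<mu> * zmx R x"
    unfolding zmx_le_iff
  proof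
    fix i
    have "(\<Sum>j\<in>UNIV. w i j * z j) \<le> (\<Sum>j\<in>UNIV. w i j * zmx R x)"
      by (rule sum_mono) (use wnn zhi in \<open>simp add: mult_left_mono\<close>)
    also have "\<dots> = \<mu> * zmx R x" by (rule wM)
    finally show "y i / R i \<le> \<mu> * zmx R x" using yz by simp
  qed
  show "\<mu> * zmn R x \<le> zmn R y"
    unfolding zmn_ge_iff
  proof
    fix i
    have "(\<Sum>j\<in>UNIV. w i j * zmn R x) \<le> (\<Sum>j\<in>UNIV. w i j * z j)"
      by (rule sum_mono) (use wnn zlo in \<open>simp add: mult_left_mono\<close>)
    moreover have "(\<Sum>j\<in>UNIV. w i j * zmn R x) = \<mu> * zmn R x" by (rule wM)
    ultimately show "\<mu> * zmn R x \<le> y i / R i" using yz by simp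
  qed
  show "c * (\<Sum>j\<in>UNIV. x j) \<le> zmn R y"
    unfolding zmn_ge_iff
  proof
    fix i
    have "c * (\<Sum>j\<in>UNIV. x j) = (\<Sum>j\<in>UNIV. c * x j)" by (simp add: sum_distrib_left)
    also have "\<dots> \<le> y i" unfolding y_def
      by (rule sum_mono) (use Ac x0 in \<open>simp add: mult_right_mono\<close>)
    also have "y i \<le> y i / R i"
    proof -
      have "y i \<ge> 0" unfolding y_def using Ac c0 x0 by (meson mult_nonneg_nonneg order_trans sum_nonneg)
      then show ?thesis using R_le1[of i] R_pos by (simp add: le_divide_eq mult_left_le)
    qed
    finally show "c * (\<Sum>j\<in>UNIV. x j) \<le> y i / R i" .
  qed
  have pair: "y i / R i - y i' / R i' \<le> (\<mu> - c) * (zmx R x - zmn R x)" for i i'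
  proof -
    let ?m = "zmn R x" and ?M = "zmx R x"
    have e1: "(\<Sum>j\<in>UNIV. w k j * z j) = (\<Sum>j\<in>UNIV. w k j * (z j - ?m)) + \<mu> * ?m" for k
    proof -
      have "(\<Sum>j\<in>UNIV. w k j * z j) = (\<Sum>j\<in>UNIV. w k j * (z j - ?m) + w k j * ?m)"
        by (rule sum.cong) (auto simp: algebra_simps)
      also have "\<dots> = (\<Sum>j\<in>UNIV. w k j * (z j - ?m)) + (\<Sum>j\<in>UNIV. w k j * ?m)" by (rule sum.distrib)
      finally show ?thesis using wM[of k ?m] by simp
    qed
    have t1: "(\<Sum>j\<in>UNIV. w i j * (z j - ?m)) \<le> (\<Sum>j\<in>UNIV. (w i j - c * R j) * (?M - ?m) + c * R j * (z j - ?m))"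
    proof (rule sum_mono)
      fix j
      have "(w i j - c * R j) * (z j - ?m) \<le> (w i j - c * R j) * (?M - ?m)"
        using w0[where i=i and j=j] zhi[of j] by (intro mult_left_mono) auto
      then show "w i j * (z j - ?m) \<le> (w i j - c * R j) * (?M - ?m) + c * R j * (z j - ?m)"
        by (simp add: algebra_simps)
    qed
    have t2: "(\<Sum>j\<in>UNIV. c * R j * (z j - ?m)) \<le> (\<Sum>j\<in>UNIV. w i' j * (z j - ?m))"
      by (rule sum_mono) (use w0 zlo in \<open>simp add: mult_right_mono\<close>)
    have t3: "(\<Sum>j\<in>UNIV. (w i j - c * R j) * (?M - ?m) + c * R j * (z j - ?m))
       = (\<mu> - c) * (?M - ?m) + (\<Sum>j\<in>UNIV. c * R j * (z j - ?m))"
    proof -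
      have "(\<Sum>j\<in>UNIV. (w i j - c * R j) * (?M - ?m)) = ((\<Sum>j\<in>UNIV. w i j) - c * (\<Sum>j\<in>UNIV. R j)) * (?M - ?m)"
        by (simp only: sum_distrib_right[symmetric] sum_subtractf sum_distrib_left)
      then show ?thesis using wsum1[of i] R_norm by (simp add: sum.distrib)
    qed
    show ?thesis using yz[of i] yz[of i'] e1[of i] e1[of i'] t1 t2 t3 by linarith
  qed
  obtain i where i: "zmx R y = y i / R i" using zmx_ex by blast
  obtain i' where i': "zmn R y = y i' / R i'" using zmn_ex by blast
  show "zmx R y - zmn R y \<le> (\<mu> - c) * (zmx R x - zmn R x)" using pair[of i i'] i i' by simp
qed

lemma freq_aux:
  assumes x0: "\<forall>j. x j \<ge> 0"
  shows "\<bar>x i - R i * (\<Sum>j\<in>UNIV. x j)\<bar> \<le> zmx R x - zmn R x" "zmn R x \<le> (\<Sum>j\<in>UNIV. x j)"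
proof -
  define z where "z j = x j / R j" for j
  have xz: "x j = R j * z j" for j unfolding z_def using R_pos by (metis less_irrefl nonzero_mult_div_cancel_left times_divide_eq_right)
  have zlo: "zmn R x \<le> z j" and zhi: "z j \<le> zmx R x" for j unfolding z_def by (rule zmn_le, rule zmx_ge)
  have S: "(\<Sum>j\<in>UNIV. x j) = (\<Sum>j\<in>UNIV. R j * z j)" using xz by simp
  have "(\<Sum>j\<in>UNIV. R j * zmn R x) \<le> (\<Sum>j\<in>UNIV. R j * z j)"
    by (rule sum_mono) (use R_pos zlo in \<open>simp add: mult_left_mono less_imp_le\<close>)
  then have lo: "zmn R x \<le> (\<Sum>j\<in>UNIV. x j)" using S R_norm by (simp add: sum_distrib_right[symmetric])
  have "(\<Sum>j\<in>UNIV. R j * z j) \<le> (\<Sum>j\<in>UNIV. R j * zmx R x)"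
    by (rule sum_mono) (use R_pos zhi in \<open>simp add: mult_left_mono less_imp_le\<close>)
  then have hi: "(\<Sum>j\<in>UNIV. x j) \<le> zmx R x" using S R_norm by (simp add: sum_distrib_right[symmetric])
  have "\<bar>z i - (\<Sum>j\<in>UNIV. x j)\<bar> \<le> zmx R x - zmn R x" using lo hi zlo[of i] zhi[of i] by linarith
  then have "R i * \<bar>z i - (\<Sum>j\<in>UNIV. x j)\<bar> \<le> zmx R x - zmn R x"
    using R_le1[of i] R_pos by (smt (verit) mult_left_le_one_le abs_ge_zero)
  moreover have "\<bar>x i - R i * (\<Sum>j\<in>UNIV. x j)\<bar> = R i * \<bar>z i - (\<Sum>j\<in>UNIV. x j)\<bar>"
  proof -
    have "x i - R i * (\<Sum>j\<in>UNIV. x j) = R i * (z i - (\<Sum>j\<in>UNIV. x j))"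
      using xz[of i] by (simp add: right_diff_distrib)
    then show ?thesis using R_pos[rule_format, of i] by (simp add: abs_mult)
  qed
  ultimately show "\<bar>x i - R i * (\<Sum>j\<in>UNIV. x j)\<bar> \<le> zmx R x - zmn R x" by simp
  show "zmn R x \<le> (\<Sum>j\<in>UNIV. x j)" by (rule lo)
qed

end



locale PF = RS th + posvec R for th :: "'a::finite \<Rightarrow> 'a list set" and R +
  fixes lam :: real
  assumes prim: "primitive_mat (subst_matrix th)"
    and R_eig: "\<forall>i. (\<Sum>j\<in>UNIV. real (subst_matrix th i j) * R j) = lam * R i"
begin

lemma mulM_pow_mat: "(mulM th ^^ k) x i = (\<Sum>j\<in>UNIV. real (mat_pow M k i j) * x j)"
proof (induction k arbitrary: x i)
  case 0
  have "(\<Sum>j\<in>UNIV. real (mat_pow M 0 i j) * x j) = (\<Sum>j\<in>UNIV. if i = j then x j else 0)"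
    by (rule sum.cong) auto
  then show ?case by simp
next
  case (Suc k)
  have "(mulM th ^^ Suc k) x i = (mulM th ^^ k) (mulM th x) i" by (simp only: funpow_Suc_right o_apply)
  also have "\<dots> = (\<Sum>j\<in>UNIV. real (mat_pow M k i j) * (\<Sum>l\<in>UNIV. real (M j l) * x l))"
    by (simp add: Suc.IH mulM_def)
  also have "\<dots> = (\<Sum>j\<in>UNIV. \<Sum>l\<in>UNIV. real (mat_pow M k i j) * real (M j l) * x l)"
    by (simp add: sum_distrib_left mult.assoc)
  also have "\<dots> = (\<Sum>l\<in>UNIV. \<Sum>j\<in>UNIV. real (mat_pow M k i j) * real (M j l) * x l)"
    by (rule sum.swap)
  also have "\<dots> = (\<Sum>l\<in>UNIV. real (mat_pow M (Suc k) i l) * x l)"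
    by (simp add: sum_distrib_right)
  finally show ?case .
qed

lemma mulM_pow_R: "(mulM th ^^ k) R = (\<lambda>i. lam ^ k * R i)"
proof (induction k)
  case 0 then show ?case by simp
next
  case (Suc k)
  show ?case
  proof
    fix i
    have "(mulM th ^^ Suc k) R i = (\<Sum>j\<in>UNIV. real (M i j) * (lam ^ k * R j))"
      by (simp add: Suc.IH mulM_def)
    also have "\<dots> = lam ^ k * (\<Sum>j\<in>UNIV. real (M i j) * R j)"
      by (simp add: sum_distrib_left algebra_simps)
    also have "\<dots> = lam ^ Suc k * R i" using R_eig by simp
    finally show "(mulM th ^^ Suc k) R i = lam ^ Suc k * R i" .
  qed
qed

lemma pow_vec_nonneg: "(mulM th ^^ m) (ev b) i \<ge> 0"
proof -
  obtain w where "w \<in> subst_pow th m b" using pow_ne by blast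
  from pow_count[OF this, of i] show ?thesis by simp
qed

lemma pow_vec_len: "w \<in> subst_pow th m b \<Longrightarrow> (\<Sum>i\<in>UNIV. (mulM th ^^ m) (ev b) i) = real (length w)"
  using pow_count[of w m b] length_sum_count[of w] by simp

lemma blockfreq: "\<forall>\<eta>>0. \<exists>k. \<forall>b w i. w \<in> subst_pow th k b \<longrightarrow>
     \<bar>real (count_list w i) - R i * real (length w)\<bar> \<le> \<eta> * real (length w)"
proof (intro allI impI)
  fix \<eta> :: real assume eta: "\<eta> > 0"
  obtain k0 where k0: "k0 > 0" "\<forall>i j. mat_pow M k0 i j > 0"
    using prim unfolding primitive_mat_def by blast
  define P where "P i j = real (mat_pow M k0 i j)" for i j
  define \<mu> where "\<mu> = lam ^ k0"
  have P1: "\<forall>i j. P i j \<ge> 1" using k0(2) unfolding P_def by (simp add: Suc_leI)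
  have PR: "\<forall>i. (\<Sum>j\<in>UNIV. P i j * R j) = \<mu> * R i"
    using mulM_pow_mat[of k0 R] mulM_pow_R[of k0] unfolding P_def \<mu>_def by metis
  have mu1: "\<mu> \<ge> 1"
  proof -
    obtain i :: 'a where True by simp
    have "(\<Sum>j\<in>UNIV. R j) \<le> (\<Sum>j\<in>UNIV. P i j * R j)"
      by (rule sum_mono) (use P1 R_pos in \<open>simp add: less_imp_le mult_right_mono[of 1, simplified]\<close>)
    then have "1 \<le> \<mu> * R i" using PR R_norm by simp
    moreover have "\<mu> * R i \<le> \<mu>" if "\<mu> \<ge> 0" using R_le1[of i] that by (simp add: mult_left_le)
    ultimately show ?thesis using R_pos[rule_format, of i]
      by (smt (verit) mult_nonpos_nonneg)
  qed
  define q where "q = (\<mu> - 1) / \<mu>"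
  have q0: "q \<ge> 0" and q1: "q < 1" using mu1 unfolding q_def by auto
  have qmu: "\<mu> - 1 = q * \<mu>" using mu1 unfolding q_def by simp
  define Cb where "Cb = (\<Sum>i\<in>UNIV. 1 / R i)"
  have Cb: "zmx R (ev b) \<le> Cb" for b
    unfolding zmx_le_iff
  proof
    fix i
    have "ev b i / R i \<le> 1 / R i" using R_pos[rule_format, of i] by (simp add: ev_def divide_right_mono)
    also have "\<dots> \<le> Cb" unfolding Cb_def
      by (rule member_le_sum) (use R_pos in \<open>auto simp: less_imp_le\<close>)
    finally show "ev b i / R i \<le> Cb" .
  qed
  have Cb_pos: "zmx R (ev b) > 0" for b
  proof -
    have "ev b b / R b \<le> zmx R (ev b)" by (rule zmx_ge)
    moreover have "ev b b / R b > 0" using R_pos[rule_format, of b] by (simp add: ev_def)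
    ultimately show ?thesis by linarith
  qed
  have Cbpos: "Cb > 0" using Cb Cb_pos by (meson less_le_trans)
  obtain j where j: "q ^ j < \<eta> / (\<mu> * Cb)"
    using real_arch_pow_inv[OF _ q1, of "\<eta> / (\<mu> * Cb)"] eta Cbpos mu1 by auto
  define y where "y b j = (mulM th ^^ (Suc j * k0)) (ev b)" for b j
  have ynn: "\<forall>i. y b j i \<ge> 0" for b j unfolding y_def using pow_vec_nonneg by blast
  have y0: "y b 0 = (\<lambda>i. \<Sum>l\<in>UNIV. P i l * ev b l)" for b
    unfolding y_def P_def using mulM_pow_mat by auto
  have ySuc: "y b (Suc j) = (\<lambda>i. \<Sum>l\<in>UNIV. P i l * y b j l)" for b j
  proof -
    have "Suc (Suc j) * k0 = k0 + Suc j * k0" by simp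
    then have "y b (Suc j) = (mulM th ^^ k0) (y b j)" unfolding y_def by (simp only: funpow_add o_apply)
    then show ?thesis unfolding P_def using mulM_pow_mat by auto
  qed
  have ev0: "\<forall>l. ev b l \<ge> 0" for b :: 'a by (simp add: ev_def)
  have evs: "(\<Sum>l\<in>UNIV. ev b l) = 1" for b :: 'a by (simp add: ev_def sum.delta)
  have main: "zmx R (y b j) - zmn R (y b j) \<le> q ^ j * (\<mu> * zmx R (ev b)) * zmn R (y b j) \<and> zmn R (y b j) \<ge> 1" for b j
  proof (induction j)
    case 0
    note c = posvec.contr[OF posvec_axioms P1 _ PR ev0[of b], simplified, folded y0]
    have "zmn R (y b 0) \<ge> 1" using c(3) evs by simp
    moreover have "zmx R (y b 0) \<le> \<mu> * zmx R (ev b)" using c(1) .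
    moreover have "\<mu> * zmx R (ev b) \<ge> 0" using mu1 Cb_pos[of b] by simp
    ultimately show ?case using mult_left_mono[of 1 "zmn R (y b 0)" "\<mu> * zmx R (ev b)"] by simp
  next
    case (Suc j)
    note c = posvec.contr[OF posvec_axioms P1 _ PR ynn[of b j], simplified, folded ySuc]
    let ?C = "\<mu> * zmx R (ev b)"
    have C0: "q ^ Suc j * ?C \<ge> 0" using q0 mu1 Cb_pos[of b] by simp
    have "zmx R (y b (Suc j)) - zmn R (y b (Suc j)) \<le> (\<mu> - 1) * (zmx R (y b j) - zmn R (y b j))"
      using c(4) .
    also have "\<dots> \<le> (\<mu> - 1) * (q ^ j * ?C * zmn R (y b j))"
      using Suc.IH mu1 by (intro mult_left_mono) auto
    also have "\<dots> = q ^ Suc j * ?C * (\<mu> * zmn R (y b j))" by (subst qmu) (simp add: algebra_simps)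
    also have "\<dots> \<le> q ^ Suc j * ?C * zmn R (y b (Suc j))"
      using c(2) C0 by (intro mult_left_mono) auto
    finally have A: "zmx R (y b (Suc j)) - zmn R (y b (Suc j)) \<le> q ^ Suc j * ?C * zmn R (y b (Suc j))" .
    have "zmn R (y b j) \<le> \<mu> * zmn R (y b j)" using Suc.IH mu1 by (simp add: mult_le_cancel_right1)
    then have "zmn R (y b (Suc j)) \<ge> 1" using c(2) Suc.IH by linarith
    then show ?case using A by simp
  qed
  show "\<exists>k. \<forall>b w i. w \<in> subst_pow th k b \<longrightarrow>
     \<bar>real (count_list w i) - R i * real (length w)\<bar> \<le> \<eta> * real (length w)"
  proof (intro exI[of _ "Suc j * k0"] allI impI)
    fix b w i assume w: "w \<in> subst_pow th (Suc j * k0) b"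
    have cnt: "real (count_list w i) = y b j i" unfolding y_def by (rule pow_count[OF w])
    have len: "(\<Sum>i\<in>UNIV. y b j i) = real (length w)" unfolding y_def by (rule pow_vec_len[OF w])
    note fa = freq_aux[OF ynn[of b j]]
    have "\<bar>real (count_list w i) - R i * real (length w)\<bar> \<le> zmx R (y b j) - zmn R (y b j)"
      using fa(1)[of i] cnt len by simp
    also have "\<dots> \<le> q ^ j * (\<mu> * zmx R (ev b)) * zmn R (y b j)" using main by blast
    also have "\<dots> \<le> q ^ j * (\<mu> * Cb) * real (length w)"
    proof (rule mult_mono)
      show "q ^ j * (\<mu> * zmx R (ev b)) \<le> q ^ j * (\<mu> * Cb)"
        using Cb[of b] q0 mu1 by (intro mult_left_mono) auto
      show "zmn R (y b j) \<le> real (length w)" using fa(2) len by simp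
      show "0 \<le> q ^ j * (\<mu> * Cb)" using q0 mu1 Cbpos by simp
      show "0 \<le> zmn R (y b j)" using main[of b j] by simp
    qed
    also have "\<dots> \<le> \<eta> * real (length w)"
    proof (rule mult_right_mono)
      show "q ^ j * (\<mu> * Cb) \<le> \<eta>" using j mu1 Cbpos by (simp add: pos_less_divide_eq less_imp_le)
    qed simp
    finally show "\<bar>real (count_list w i) - R i * real (length w)\<bar> \<le> \<eta> * real (length w)" .
  qed
qed

end



lemma prefix_blocks:
  "u @ suf = concat ws \<Longrightarrow> (\<forall>x\<in>set ws. length x \<le> B) \<Longrightarrow>
   \<exists>ws' p. u = concat ws' @ p \<and> set ws' \<subseteq> set ws \<and> length p \<le> B"
proof (induction ws arbitrary: u)
  case Nil then show ?case by (intro exI[of _ "[]"]) simp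
next
  case (Cons x ws)
  from Cons.prems(1) have "u @ suf = x @ concat ws" by simp
  then obtain us where "(u = x @ us \<and> us @ suf = concat ws) \<or> (u @ us = x \<and> suf = us @ concat ws)"
    unfolding append_eq_append_conv2 by blast
  then show ?case
  proof
    assume a: "u = x @ us \<and> us @ suf = concat ws"
    have "\<exists>ws' p. us = concat ws' @ p \<and> set ws' \<subseteq> set ws \<and> length p \<le> B"
      using Cons.IH[of us] a Cons.prems(2) by simp
    then obtain ws' p where "us = concat ws' @ p" "set ws' \<subseteq> set ws" "length p \<le> B" by blast
    then show ?case using a by (intro exI[of _ "x # ws'"] exI[of _ p]) auto
  next
    assume a: "u @ us = x \<and> suf = us @ concat ws"
    then have "length u \<le> B" using Cons.prems(2) by auto
    then show ?case by (intro exI[of _ "[]"] exI[of _ u]) auto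
  qed
qed

lemma factor_blocks:
  "pre @ u @ suf = concat ws \<Longrightarrow> (\<forall>x\<in>set ws. length x \<le> B) \<Longrightarrow>
   \<exists>s ws' p. u = s @ concat ws' @ p \<and> set ws' \<subseteq> set ws \<and> length s \<le> B \<and> length p \<le> B"
proof (induction ws arbitrary: pre)
  case Nil then show ?case by (intro exI[of _ "[]"] exI[of _ "[]"] exI[of _ "[]"]) simp
next
  case (Cons x ws)
  from Cons.prems(1) have "pre @ (u @ suf) = x @ concat ws" by simp
  then obtain us where "(pre = x @ us \<and> us @ (u @ suf) = concat ws) \<or> (pre @ us = x \<and> u @ suf = us @ concat ws)"
    unfolding append_eq_append_conv2 by blast
  then show ?case
  proof
    assume a: "pre = x @ us \<and> us @ (u @ suf) = concat ws"
    then obtain s ws' p where "u = s @ concat ws' @ p" "set ws' \<subseteq> set ws" "length s \<le> B" "length p \<le> B"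
      using Cons.IH[of us] Cons.prems(2) by auto
    then show ?case by (intro exI[of _ s] exI[of _ ws'] exI[of _ p]) auto
  next
    assume a: "pre @ us = x \<and> u @ suf = us @ concat ws"
    have lx: "length us \<le> B" using a Cons.prems(2) by auto
    from a obtain vs where "(u = us @ vs \<and> vs @ suf = concat ws) \<or> (u @ vs = us \<and> suf = vs @ concat ws)"
      unfolding append_eq_append_conv2 by blast
    then show ?case
    proof
      assume b: "u = us @ vs \<and> vs @ suf = concat ws"
      then obtain ws' p where "vs = concat ws' @ p" "set ws' \<subseteq> set ws" "length p \<le> B"
        using prefix_blocks[of vs suf ws B] Cons.prems(2) by auto
      then show ?case using b lx by (intro exI[of _ us] exI[of _ ws'] exI[of _ p]) auto
    next
      assume b: "u @ vs = us \<and> suf = vs @ concat ws"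
      then have "length u \<le> B" using lx by auto
      then show ?case by (intro exI[of _ u] exI[of _ "[]"] exI[of _ "[]"]) auto
    qed
  qed
qed

context PF
begin

lemma triv_freq: "\<bar>real (count_list x i) - R i * real (length x)\<bar> \<le> real (length x)"
proof -
  have "real (count_list x i) \<le> real (length x)" by (simp add: count_le_length)
  moreover have "R i * real (length x) \<le> real (length x)"
    using R_le1[of i] R_pos[rule_format, of i] by (intro mult_left_le_one_le) auto
  moreover have "R i * real (length x) \<ge> 0" using R_pos[rule_format, of i] by simp
  ultimately show ?thesis by linarith
qed

lemma concat_freq:
  "(\<forall>x\<in>set xs. \<bar>real (count_list x i) - R i * real (length x)\<bar> \<le> e * real (length x)) \<Longrightarrow>
   \<bar>real (count_list (concat xs) i) - R i * real (length (concat xs))\<bar> \<le> e * real (length (concat xs))"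
proof (induction xs)
  case Nil then show ?case by simp
next
  case (Cons x xs)
  have h1: "\<bar>real (count_list x i) - R i * real (length x)\<bar> \<le> e * real (length x)" using Cons.prems by simp
  have h2: "\<bar>real (count_list (concat xs) i) - R i * real (length (concat xs))\<bar> \<le> e * real (length (concat xs))"
    using Cons by simp
  show ?case using h1 h2 by (simp add: algebra_simps)
qed

lemma lang_freq: "\<forall>\<eta>>0. \<exists>m0. \<forall>u\<in>subst_lang th. length u \<ge> m0 \<longrightarrow>
   (\<forall>i. \<bar>real (count_list u i) - R i * real (length u)\<bar> \<le> \<eta> * real (length u))"
proof (intro allI impI)
  fix \<eta> :: real assume eta: "\<eta> > 0"
  then obtain k where k: "\<forall>b w i. w \<in> subst_pow th k b \<longrightarrow>
     \<bar>real (count_list w i) - R i * real (length w)\<bar> \<le> \<eta>/2 * real (length w)"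
    using blockfreq[rule_format, of "\<eta>/2"] by auto
  define B where "B = K ^ k"
  define m0 where "m0 = B + 1 + nat \<lceil>4 * real B / \<eta>\<rceil>"
  show "\<exists>m0. \<forall>u\<in>subst_lang th. length u \<ge> m0 \<longrightarrow>
   (\<forall>i. \<bar>real (count_list u i) - R i * real (length u)\<bar> \<le> \<eta> * real (length u))"
  proof (intro exI[of _ m0] ballI impI allI)
    fix u i assume u: "u \<in> subst_lang th" and lu: "length u \<ge> m0"
    then obtain a m w p s where w: "w \<in> subst_pow th m a" "w = p @ u @ s"
      unfolding subst_lang_def by blast
    have "m \<ge> k"
    proof (rule ccontr)
      assume "\<not> m \<ge> k"
      then have "K ^ m \<le> K ^ k" using K_ge1 by (intro power_increasing) auto
      moreover have "length u \<le> length w" using w(2) by simp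
      moreover have "length w \<le> K ^ m" by (rule pow_len_le[OF w(1)])
      ultimately show False using lu unfolding m0_def B_def by linarith
    qed
    then have "w \<in> subst_pow th ((m - k) + k) a" using w(1) by simp
    from decomp[OF this] obtain ws where ws: "w = concat ws" "\<forall>x\<in>set ws. \<exists>b. x \<in> subst_pow th k b" by blast
    have wsB: "\<forall>x\<in>set ws. length x \<le> B" using ws(2) pow_len_le unfolding B_def by blast
    obtain s' ws' p' where dec: "u = s' @ concat ws' @ p'" "set ws' \<subseteq> set ws" "length s' \<le> B" "length p' \<le> B"
      using factor_blocks[of p u s ws B] w(2) ws(1) wsB by auto
    have cf: "\<bar>real (count_list (concat ws') i) - R i * real (length (concat ws'))\<bar> \<le> \<eta>/2 * real (length (concat ws'))"
      using dec(2) ws(2) k by (intro concat_freq) blast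
    have ls: "real (length (concat ws')) \<le> real (length u)" using dec(1) by simp
    note t1 = triv_freq[of s' i] and t2 = triv_freq[of p' i]
    have "\<bar>real (count_list u i) - R i * real (length u)\<bar> \<le>
        real (length s') + \<eta>/2 * real (length (concat ws')) + real (length p')"
    proof -
      have eq: "real (count_list u i) - R i * real (length u) =
        (real (count_list s' i) - R i * real (length s')) +
        (real (count_list (concat ws') i) - R i * real (length (concat ws'))) +
        (real (count_list p' i) - R i * real (length p'))"
        using dec(1) by (simp add: algebra_simps)
      show ?thesis unfolding eq using t1 t2 cf by (smt (verit))
    qed
    also have "\<dots> \<le> 2 * real B + \<eta>/2 * real (length u)"
    proof -
      have "\<eta>/2 * real (length (concat ws')) \<le> \<eta>/2 * real (length u)"
        using ls eta by (intro mult_left_mono) auto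
      moreover have "real (length s') \<le> real B" "real (length p') \<le> real B" using dec(3,4) by auto
      ultimately show ?thesis by linarith
    qed
    also have "\<dots> \<le> \<eta> * real (length u)"
    proof -
      have "4 * real B / \<eta> \<le> real (length u)" using lu unfolding m0_def by linarith
      then have "4 * real B \<le> \<eta> * real (length u)" using eta by (simp add: divide_le_eq mult.commute)
      then show ?thesis by simp
    qed
    finally show "\<bar>real (count_list u i) - R i * real (length u)\<bar> \<le> \<eta> * real (length u)" .
  qed
qed

end



lemma lang_len_fin: "finite (lang_len th (m::nat) :: ('a::finite) list set)"
proof -
  have "lang_len th m \<subseteq> {xs. set xs \<subseteq> (UNIV::'a set) \<and> length xs = m}" unfolding lang_len_def by auto
  moreover have "finite {xs. set xs \<subseteq> (UNIV::'a set) \<and> length xs = m}" by (rule finite_lists_length_eq) simp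
  ultimately show ?thesis by (rule finite_subset)
qed

lemma lang_mono:
  assumes ext: "\<forall>u\<in>subst_lang th. \<exists>c. u @ [c] \<in> subst_lang th" and mm: "m \<le> m'"
  shows "card (lang_len th m :: ('a::finite) list set) \<le> card (lang_len th m')"
proof -
  have ex: "\<forall>u\<in>lang_len th m. \<exists>v\<in>lang_len th m'. take m v = u"
    using mm
  proof (induction m' rule: dec_induct)
    case base then show ?case unfolding lang_len_def by auto
  next
    case (step k)
    show ?case
    proof
      fix u assume "u \<in> lang_len th m"
      then obtain v where v: "v \<in> lang_len th k" "take m v = u" using step.IH by blast
      then obtain c where c: "v @ [c] \<in> subst_lang th" using ext unfolding lang_len_def by blast
      have "v @ [c] \<in> lang_len th (Suc k)" using c v(1) unfolding lang_len_def by auto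
      moreover have "take m (v @ [c]) = u" using v step.hyps unfolding lang_len_def by auto
      ultimately show "\<exists>v\<in>lang_len th (Suc k). take m v = u" by blast
    qed
  qed
  have "lang_len th m \<subseteq> take m ` lang_len th m'"
  proof
    fix u assume "u \<in> lang_len th m"
    then obtain v where "v \<in> lang_len th m'" "take m v = u" using ex by blast
    then show "u \<in> take m ` lang_len th m'" by (metis image_eqI)
  qed
  then have "card (lang_len th m) \<le> card (take m ` lang_len th m')"
    by (rule card_mono[OF finite_imageI[OF lang_len_fin]])
  also have "\<dots> \<le> card (lang_len th m')" by (rule card_image_le[OF lang_len_fin])
  finally show ?thesis .
qed

context RS begin

lemma degen_len: assumes K1: "K = 1" shows "w \<in> subst_pow th m b \<Longrightarrow> length w = 1"
proof (induction m arbitrary: w)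
  case 0 then show ?case by simp
next
  case (Suc m)
  then obtain w' where w': "w' \<in> subst_pow th m b" "w \<in> subst_word th w'"
    by (auto simp: subst_set_def)
  have "length w \<le> K * length w'" by (rule sw_len_le[OF w'(2)])
  moreover have "length w \<ge> length w'" by (rule sw_len_ge[OF w'(2)])
  ultimately show ?case using Suc.IH[OF w'(1)] K1 by simp
qed

lemma degen_lang: assumes K1: "K = 1" and N: "N \<ge> 2" shows "lang_len th N = {}"
proof -
  { fix u assume "u \<in> subst_lang th" "length u = N"
    then obtain a m w p s where "w \<in> subst_pow th m a" "w = p @ u @ s" unfolding subst_lang_def by blast
    then have "length u \<le> 1" using degen_len[OF K1] by fastforce
    with N \<open>length u = N\<close> have False by simp }
  then show ?thesis unfolding lang_len_def by blast
qed

end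

context PF begin

lemma all_letters: obtains k0 where "k0 > 0" "\<And>c w a. w \<in> subst_pow th k0 c \<Longrightarrow> a \<in> set w"
proof -
  obtain k0 where k0: "k0 > 0" "\<forall>i j. mat_pow M k0 i j > 0"
    using prim unfolding primitive_mat_def by blast
  have "a \<in> set w" if w: "w \<in> subst_pow th k0 c" for c w a
  proof -
    have "real (count_list w a) = (\<Sum>j\<in>UNIV. real (mat_pow M k0 a j) * ev c j)"
      using pow_count[OF w] mulM_pow_mat by simp
    also have "\<dots> = (\<Sum>j\<in>UNIV. if j = c then real (mat_pow M k0 a c) else 0)"
      by (rule sum.cong) (auto simp: ev_def)
    also have "\<dots> = real (mat_pow M k0 a c)" by (simp add: sum.delta)
    finally have "count_list w a > 0" using k0(2) by simp
    then show ?thesis using count_notin by fastforce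
  qed
  then show ?thesis using that k0(1) by blast
qed

lemma extend:
  assumes K2: "K \<ge> 2" and u: "u \<in> subst_lang th"
  shows "\<exists>c. u @ [c] \<in> subst_lang th"
proof -
  obtain a m w p s where uw: "u \<noteq> []" "w \<in> subst_pow th m a" "w = p @ u @ s"
    using u unfolding subst_lang_def by blast
  show ?thesis
  proof (cases s)
    case (Cons e s')
    have "w = p @ (u @ [e]) @ s'" using uw(3) Cons by simp
    then have "u @ [e] \<in> subst_lang th" unfolding subst_lang_def using uw(2) by blast
    then show ?thesis by blast
  next
    case Nil
    obtain k0 where k0: "k0 > 0" "\<And>c w a. w \<in> subst_pow th k0 c \<Longrightarrow> a \<in> set w" using all_letters by blast
    have "K \<in> range ell" by (rule Max_in) auto
    then obtain b where "K = ell b" by blast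
    then have b: "ell b = K" by simp
    obtain w0 where w0: "w0 \<in> th b" using th_ne by blast
    have lw0: "length w0 \<ge> 2" using th_len[OF w0] b K2 by simp
    from lw0 obtain c0 w1 where w01: "w0 = c0 # w1" by (cases w0) auto
    with lw0 obtain c1 rest where "w1 = c1 # rest" by (cases w1) auto
    with w01 have w0s: "w0 = c0 # c1 # rest" by simp
    define g where "g k c = (SOME v. v \<in> subst_pow th k c)" for k c
    have g: "g k c \<in> subst_pow th k c" for k c unfolding g_def using pow_ne by (simp add: some_in_eq)
    have gne: "g k c \<noteq> []" for k c using pow_len_ge[OF g[of k c]] by auto
    have "a \<in> set (g k0 c0)" using k0(2)[OF g] .
    then obtain x y where xy: "g k0 c0 = x @ a # y" by (meson split_list)
    define z where "z = concat (map (g k0) w0)"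
    have la: "list_all2 (\<lambda>v c. v \<in> subst_pow th k c) (map (g k) ys) ys" for k ys
      by (unfold list_all2_map1) (rule list_all2_refl, rule g)
    have w0': "w0 \<in> subst_pow th (Suc 0) b" using w0 pow_one[of th b] by simp
    have z: "z \<in> subst_pow th (Suc 0 + k0) b" unfolding z_def
      by (rule constr[OF w0' la])
    define z3 where "z3 = y @ concat (map (g k0) (c1 # rest))"
    have zz: "z = x @ [a] @ z3" unfolding z_def z3_def w0s using xy by simp
    have z3ne: "z3 \<noteq> []" unfolding z3_def using gne by simp
    then obtain d z3' where z3s: "z3 = d # z3'" by (cases z3) auto
    define vs where "vs = map (g m) x @ [w] @ map (g m) z3"
    have vs: "list_all2 (\<lambda>v c. v \<in> subst_pow th m c) vs z"
      unfolding vs_def zz using uw(2) by (intro list_all2_appendI la) simp_all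
    have big: "concat vs \<in> subst_pow th (Suc 0 + k0 + m) b" by (rule constr[OF z vs])
    obtain e t where et: "g m d = e # t" using gne by (cases "g m d") auto
    have "concat vs = (concat (map (g m) x) @ p) @ (u @ [e]) @ (t @ concat (map (g m) z3'))"
      unfolding vs_def using uw(3) Nil z3s et by simp
    then have "u @ [e] \<in> subst_lang th" unfolding subst_lang_def using big by blast
    then show ?thesis by blast
  qed
qed

end



lemma card_nat_interval:
  fixes a b :: real
  assumes a0: "0 \<le> a" and ab: "a \<le> b"
  shows "finite {m::nat. a \<le> real m \<and> real m \<le> b}"
    "real (card {m::nat. a \<le> real m \<and> real m \<le> b}) \<le> b - a + 1"
proof -
  have sub: "{m::nat. a \<le> real m \<and> real m \<le> b} \<subseteq> {nat \<lceil>a\<rceil>..nat \<lfloor>b\<rfloor>}"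
  proof
    fix m assume "m \<in> {m::nat. a \<le> real m \<and> real m \<le> b}"
    then have "a \<le> real m" "real m \<le> b" by auto
    then have "\<lceil>a\<rceil> \<le> int m" "int m \<le> \<lfloor>b\<rfloor>"
      by (simp_all only: ceiling_le_iff le_floor_iff of_int_of_nat_eq)
    then have "nat \<lceil>a\<rceil> \<le> m" "m \<le> nat \<lfloor>b\<rfloor>" by (simp_all only: nat_le_iff)
    then show "m \<in> {nat \<lceil>a\<rceil>..nat \<lfloor>b\<rfloor>}" by (simp only: atLeastAtMost_iff)
  qed
  show "finite {m::nat. a \<le> real m \<and> real m \<le> b}" using sub finite_subset by blast
  have "card {m::nat. a \<le> real m \<and> real m \<le> b} \<le> card {nat \<lceil>a\<rceil>..nat \<lfloor>b\<rfloor>}"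
    by (rule card_mono[OF _ sub]) simp
  also have "\<dots> = Suc (nat \<lfloor>b\<rfloor>) - nat \<lceil>a\<rceil>" by simp
  finally have c: "real (card {m::nat. a \<le> real m \<and> real m \<le> b}) \<le> real (Suc (nat \<lfloor>b\<rfloor>) - nat \<lceil>a\<rceil>)" by linarith
  have fb: "real (nat \<lfloor>b\<rfloor>) \<le> b" using a0 ab by simp
  have ca: "real (nat \<lceil>a\<rceil>) \<ge> a" using a0 by (simp add: ceiling_correct)
  have "real (Suc (nat \<lfloor>b\<rfloor>) - nat \<lceil>a\<rceil>) \<le> b - a + 1"
  proof (cases "nat \<lceil>a\<rceil> \<le> Suc (nat \<lfloor>b\<rfloor>)")
    case True
    then have "real (Suc (nat \<lfloor>b\<rfloor>) - nat \<lceil>a\<rceil>) = real (nat \<lfloor>b\<rfloor>) + 1 - real (nat \<lceil>a\<rceil>)"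
      by (simp add: of_nat_diff)
    then show ?thesis using fb ca by linarith
  next
    case False
    then have "Suc (nat \<lfloor>b\<rfloor>) - nat \<lceil>a\<rceil> = 0" by (simp only: not_le)
    then show ?thesis using ab by simp
  qed
  then show "real (card {m::nat. a \<le> real m \<and> real m \<le> b}) \<le> b - a + 1" using c by linarith
qed

lemma prod_list_count: "prod_list (map f xs) = (\<Prod>x\<in>(UNIV::'a::finite set). f x ^ count_list xs x)"
proof (induction xs)
  case Nil then show ?case by simp
next
  case (Cons c xs)
  have "(\<Prod>x\<in>UNIV. f x ^ count_list (c # xs) x) = (\<Prod>x\<in>UNIV. (if x = c then f x else 1) * f x ^ count_list xs x)"
    by (rule prod.cong) auto
  also have "\<dots> = (\<Prod>x\<in>UNIV. (if x = c then f x else 1)) * (\<Prod>x\<in>UNIV. f x ^ count_list xs x)"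
    by (rule prod.distrib)
  also have "(\<Prod>x\<in>UNIV. (if x = c then f x else 1)) = f c" by (simp add: prod.delta)
  finally show ?case using Cons by simp
qed

context PF begin

lemma lam_ell: "lam = (\<Sum>j\<in>UNIV. R j * real (ell j))"
proof -
  have "(\<Sum>j\<in>UNIV. R j * real (ell j)) = (\<Sum>j\<in>UNIV. \<Sum>i\<in>UNIV. real (M i j) * R j)"
    by (simp add: ell_sum sum_distrib_left mult.commute)
  also have "\<dots> = (\<Sum>i\<in>UNIV. \<Sum>j\<in>UNIV. real (M i j) * R j)" by (rule sum.swap)
  also have "\<dots> = (\<Sum>i\<in>UNIV. lam * R i)" using R_eig by simp
  also have "\<dots> = lam" using R_norm by (simp add: sum_distrib_left[symmetric])
  finally show ?thesis by simp
qed

lemma card_th: "real (card (th i)) \<ge> 1"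
  using th_fin[of i] th_ne[of i] by (simp add: Suc_leI card_gt_0_iff)

end



context PF begin

lemma final:
  fixes \<epsilon> :: real
  assumes ep: "\<epsilon> > 0" and lamb: "lam > \<epsilon> * real (card (UNIV::'a set)) * real K"
  shows "\<exists>N0. \<forall>N\<ge>N0.
        real (card (subst_set th (subst_lang th) \<inter> lang_len th N))
           \<le> real N * (1 / (lam - \<epsilon> * real (card (UNIV::'a set)) * real K) - 1 / (lam + \<epsilon> * real (card (UNIV::'a set)) * real K))
             * real (card (lang_len th (nat \<lfloor>real N / (lam - \<epsilon> * real (card (UNIV::'a set)) * real K)\<rfloor>)))
             * (\<Prod>i\<in>UNIV. real (card (th i)) powr ((R i + \<epsilon>) * real N / (lam - \<epsilon> * real (card (UNIV::'a set)) * real K)))"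
proof -
  define n where "n = real (card (UNIV::'a set))"
  define nK where "nK = n * real K"
  have n1: "n \<ge> 1" unfolding n_def using card_gt_0_iff[of "UNIV::'a set"] by (simp add: Suc_leI)
  have Kr: "real K \<ge> 1" using K_ge1 by simp
  have "1 * 1 \<le> n * real K" by (rule mult_mono) (use n1 Kr in auto)
  then have nK1: "nK \<ge> 1" unfolding nK_def by simp
  define lm where "lm = lam - \<epsilon> * nK"
  define lp where "lp = lam + \<epsilon> * nK"
  have lm0: "lm > 0" unfolding lm_def nK_def n_def using lamb by (simp add: mult.assoc)
  have lmlp: "lm < lp" unfolding lm_def lp_def using ep nK1 by simp
  define Pi where "Pi N = (\<Prod>i\<in>UNIV. real (card (th i)) powr ((R i + \<epsilon>) * real N / lm))" for N :: nat
  define L where "L N = real (card (lang_len th (nat \<lfloor>real N / lm\<rfloor>)))" for N :: nat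
  have Pi0: "Pi N \<ge> 0" for N unfolding Pi_def by (intro prod_nonneg) simp
  have L0: "L N \<ge> 0" for N unfolding L_def by simp
  have coef0: "1 / lm - 1 / lp \<ge> 0" using lm0 lmlp by (simp add: frac_le)
  have goal: "\<exists>N0. \<forall>N\<ge>N0. real (card (subst_set th (subst_lang th) \<inter> lang_len th N)) \<le> real N * (1 / lm - 1 / lp) * L N * Pi N"
  proof (cases "K = 1")
    case True
    show ?thesis
    proof (intro exI[of _ 2] allI impI)
      fix N :: nat assume "N \<ge> 2"
      then have "lang_len th N = {}" by (rule degen_lang[OF True])
      then show "real (card (subst_set th (subst_lang th) \<inter> lang_len th N)) \<le> real N * (1 / lm - 1 / lp) * L N * Pi N"
        using coef0 L0 Pi0 by simp
    qed
  next
    case False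
    then have K2: "K \<ge> 2" using K_ge1 by simp
    have ext: "\<forall>u\<in>subst_lang th. \<exists>c. u @ [c] \<in> subst_lang th" using extend[OF K2] by blast
    define e where "e = \<epsilon> / 2"
    have e0: "e > 0" unfolding e_def using ep by simp
    obtain m0 where m0: "\<forall>u\<in>subst_lang th. length u \<ge> m0 \<longrightarrow>
       (\<forall>i. \<bar>real (count_list u i) - R i * real (length u)\<bar> \<le> e * real (length u))"
      using lang_freq e0 by blast
    define lm' where "lm' = lam - e * nK"
    define lp' where "lp' = lam + e * nK"
    have lmlm: "lm < lm'" unfolding lm_def lm'_def e_def using ep nK1 by simp
    have lplp: "lp' < lp" unfolding lp_def lp'_def e_def using ep nK1 by simp
    have lm'lp': "lm' \<le> lp'" unfolding lm'_def lp'_def using e0 nK1 by simp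
    have lm'0: "lm' > 0" using lm0 lmlm by simp
    define d where "d = (1/lm - 1/lm') + (1/lp' - 1/lp)"
    have d0: "d > 0" unfolding d_def using lm0 lmlm lplp lm'0 lm'lp'
      by (smt (verit, best) frac_less2 divide_pos_pos)
    define N0 where "N0 = K * m0 + nat \<lceil>1 / d\<rceil>"
    show ?thesis
    proof (intro exI[of _ N0] allI impI)
      fix N :: nat assume N: "N \<ge> N0"
      define S where "S = {m::nat. real N / lp' \<le> real m \<and> real m \<le> real N / lm'}"
      have ab: "real N / lp' \<le> real N / lm'" using lm'0 lm'lp' by (simp add: frac_le)
      note Sfin = card_nat_interval(1)[OF _ ab, folded S_def]
      note Scard = card_nat_interval(2)[OF _ ab, folded S_def]
      have Sfin': "finite S" using Sfin lm'0 lm'lp' by simp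
      have Scard': "real (card S) \<le> real N / lm' - real N / lp' + 1" using Scard lm'0 lm'lp' by simp
      define Src where "Src = {u \<in> subst_lang th. m0 \<le> length u \<and> length u \<in> S}"
      define Mx where "Mx = nat \<lfloor>real N / lm\<rfloor>"
      have SMx: "m \<le> Mx" if "m \<in> S" for m
      proof -
        have "real m \<le> real N / lm'" using that unfolding S_def by simp
        also have "\<dots> \<le> real N / lm" using lm0 lmlm by (simp add: frac_le)
        finally have "real m \<le> real N / lm" .
        then show ?thesis unfolding Mx_def by (simp add: le_nat_floor)
      qed
      have SrcSub: "Src \<subseteq> (\<Union>m\<in>S. lang_len th m)" unfolding Src_def lang_len_def by auto
      have SrcFin: "finite Src" using SrcSub Sfin' lang_len_fin by (meson finite_UN_I finite_subset)
      have "card Src \<le> card (\<Union>m\<in>S. lang_len th m)"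
        using SrcSub Sfin' lang_len_fin by (intro card_mono) auto
      also have "\<dots> \<le> (\<Sum>m\<in>S. card (lang_len th m))" by (rule card_UN_le[OF Sfin'])
      also have "\<dots> \<le> (\<Sum>m\<in>S. card (lang_len th Mx))"
        by (rule sum_mono) (rule lang_mono[OF ext SMx])
      also have "\<dots> = card S * card (lang_len th Mx)" by simp
      finally have cSrc: "real (card Src) \<le> real (card S) * L N"
        unfolding L_def Mx_def by (simp flip: of_nat_mult)
      have cover: "subst_set th (subst_lang th) \<inter> lang_len th N \<subseteq> (\<Union>u\<in>Src. subst_word th u)"
      proof
        fix v assume v: "v \<in> subst_set th (subst_lang th) \<inter> lang_len th N"
        then obtain u where u: "u \<in> subst_lang th" "v \<in> subst_word th u" unfolding subst_set_def by blast
        have lv: "length v = N" using v unfolding lang_len_def by simp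
        have "N \<le> K * length u" using sw_len_le[OF u(2)] lv by simp
        moreover have "K * m0 \<le> N" using N unfolding N0_def by simp
        ultimately have "K * m0 \<le> K * length u" by linarith
        then have um0: "m0 \<le> length u" using K_ge1 by simp
        have fr: "\<bar>real (count_list u i) - R i * real (length u)\<bar> \<le> e * real (length u)" for i
          using m0 u(1) um0 by blast
        have lvN: "real N = (\<Sum>j\<in>UNIV. real (count_list u j) * real (ell j))"
          using sw_len2[OF u(2)] lv by simp
        have lamu: "lam * real (length u) = (\<Sum>j\<in>UNIV. R j * real (length u) * real (ell j))"
        proof -
          have "lam * real (length u) = (\<Sum>j\<in>UNIV. R j * real (ell j) * real (length u))"
            unfolding lam_ell by (rule sum_distrib_right)
          also have "\<dots> = (\<Sum>j\<in>UNIV. R j * real (length u) * real (ell j))"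
            by (rule sum.cong) (simp_all add: mult.commute mult.left_commute)
          finally show ?thesis .
        qed
        have "\<bar>real N - lam * real (length u)\<bar> = \<bar>\<Sum>j\<in>UNIV. (real (count_list u j) - R j * real (length u)) * real (ell j)\<bar>"
          unfolding lvN lamu by (simp add: sum_subtractf left_diff_distrib)
        also have "\<dots> \<le> (\<Sum>j\<in>UNIV. \<bar>(real (count_list u j) - R j * real (length u)) * real (ell j)\<bar>)"
          by (rule sum_abs)
        also have "\<dots> \<le> (\<Sum>j\<in>(UNIV::'a set). e * real (length u) * real K)"
        proof -
          have pw: "\<bar>(real (count_list u j) - R j * real (length u)) * real (ell j)\<bar> \<le> e * real (length u) * real K" for j
          proof -
          have "\<bar>(real (count_list u j) - R j * real (length u)) * real (ell j)\<bar>
                = \<bar>real (count_list u j) - R j * real (length u)\<bar> * real (ell j)" by (simp add: abs_mult)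
            also have "\<dots> \<le> e * real (length u) * real K"
              using fr[of j] ell_le_K[of j] e0 by (intro mult_mono) auto
            finally show "\<bar>(real (count_list u j) - R j * real (length u)) * real (ell j)\<bar> \<le> e * real (length u) * real K" .
          qed
          show ?thesis by (intro sum_mono pw)
        qed
        also have "\<dots> = e * nK * real (length u)" unfolding nK_def n_def by simp
        finally have dev: "\<bar>real N - lam * real (length u)\<bar> \<le> e * nK * real (length u)" .
        have "lm' * real (length u) \<le> real N" using dev unfolding lm'_def by (simp add: algebra_simps)
        then have h1: "real (length u) \<le> real N / lm'" using lm'0 by (simp add: le_divide_eq mult.commute)
        have "real N \<le> lp' * real (length u)" using dev unfolding lp'_def by (simp add: algebra_simps)
        then have h2: "real N / lp' \<le> real (length u)" using lm'0 lm'lp' by (simp add: divide_le_eq mult.commute)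
        have "u \<in> Src" unfolding Src_def S_def using u(1) um0 h1 h2 by simp
        then show "v \<in> (\<Union>u\<in>Src. subst_word th u)" using u(2) by blast
      qed
      have per: "real (card (subst_word th u)) \<le> Pi N" if uS: "u \<in> Src" for u
      proof -
        have uL: "u \<in> subst_lang th" and um0: "m0 \<le> length u" and uSS: "length u \<in> S"
          using uS unfolding Src_def by auto
        have lu: "real (length u) \<le> real N / lm"
        proof -
          have "real (length u) \<le> real N / lm'" using uSS unfolding S_def by simp
          also have "\<dots> \<le> real N / lm" using lm0 lmlm by (simp add: frac_le)
          finally show ?thesis .
        qed
        have "card (subst_word th u) \<le> prod_list (map (\<lambda>c. card (th c)) u)" using sw_fin_card by blast
        also have "\<dots> = (\<Prod>i\<in>UNIV. card (th i) ^ count_list u i)" by (rule prod_list_count)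
        finally have cn: "card (subst_word th u) \<le> (\<Prod>i\<in>UNIV. card (th i) ^ count_list u i)" .
        have "real (card (subst_word th u)) \<le> real (\<Prod>i\<in>UNIV. card (th i) ^ count_list u i)"
          using cn by (simp only: of_nat_le_iff)
        also have "\<dots> = (\<Prod>i\<in>UNIV. real (card (th i)) ^ count_list u i)" by simp
        also have "\<dots> \<le> Pi N" unfolding Pi_def
        proof (rule prod_mono, rule conjI)
          fix i
          have c1: "real (card (th i)) \<ge> 1" by (rule card_th)
          show "0 \<le> real (card (th i)) ^ count_list u i" by simp
          have "real (count_list u i) - R i * real (length u) \<le> e * real (length u)"
            using m0 uL um0 by (meson abs_le_D1)
          moreover have "(R i + e) * real (length u) = R i * real (length u) + e * real (length u)"
            by (simp add: distrib_right)
          ultimately have "real (count_list u i) \<le> (R i + e) * real (length u)" by linarith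
          also have "\<dots> \<le> (R i + \<epsilon>) * real (length u)"
            unfolding e_def using ep by (intro mult_right_mono) auto
          also have "\<dots> \<le> (R i + \<epsilon>) * (real N / lm)"
            using lu ep R_pos[rule_format, of i] by (intro mult_left_mono) auto
          finally have ci: "real (count_list u i) \<le> (R i + \<epsilon>) * real N / lm" by simp
          have "real (card (th i)) ^ count_list u i = real (card (th i)) powr real (count_list u i)"
            using c1 by (simp add: powr_realpow)
          also have "\<dots> \<le> real (card (th i)) powr ((R i + \<epsilon>) * real N / lm)"
            by (rule powr_mono[OF ci c1])
          finally show "real (card (th i)) ^ count_list u i \<le> real (card (th i)) powr ((R i + \<epsilon>) * real N / lm)" .
        qed
        finally show ?thesis .
      qed
      have UFin: "finite (\<Union>u\<in>Src. subst_word th u)" using SrcFin sw_fin_card by blast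
      have "real (card (subst_set th (subst_lang th) \<inter> lang_len th N)) \<le> real (card (\<Union>u\<in>Src. subst_word th u))"
        using card_mono[OF UFin cover] by simp
      also have "\<dots> \<le> real (\<Sum>u\<in>Src. card (subst_word th u))"
        using card_UN_le[OF SrcFin, of "subst_word th"] by linarith
      also have "\<dots> = (\<Sum>u\<in>Src. real (card (subst_word th u)))" by simp
      also have "\<dots> \<le> (\<Sum>u\<in>Src. Pi N)" by (rule sum_mono) (rule per)
      also have "\<dots> = real (card Src) * Pi N" by simp
      also have "\<dots> \<le> real (card S) * L N * Pi N" using cSrc Pi0 by (intro mult_right_mono) auto
      also have "\<dots> \<le> real N * (1 / lm - 1 / lp) * L N * Pi N"
      proof -
        have "nat \<lceil>1 / d\<rceil> \<le> N" using N unfolding N0_def by linarith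
        then have "real (nat \<lceil>1 / d\<rceil>) \<le> real N" by (simp only: of_nat_le_iff)
        moreover have "1 / d \<le> real (nat \<lceil>1 / d\<rceil>)" by linarith
        ultimately have "1 / d \<le> real N" by linarith
        then have Nd: "1 \<le> real N * d" using d0 by (simp add: divide_le_eq mult.commute)
        have "real N * (1 / lm - 1 / lp) = real N / lm' - real N / lp' + real N * d"
          unfolding d_def by (simp add: algebra_simps)
        then have "real (card S) \<le> real N * (1 / lm - 1 / lp)" using Scard' Nd by linarith
        then show ?thesis using L0 Pi0 by (intro mult_right_mono) auto
      qed
      finally show "real (card (subst_set th (subst_lang th) \<inter> lang_len th N)) \<le> real N * (1 / lm - 1 / lp) * L N * Pi N" .
    qed
  qed
  then show ?thesis unfolding lm_def lp_def nK_def n_def L_def Pi_def by (simp add: mult.assoc)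
qed

end

theorem mainTheorem6:
  fixes th :: "'a::finite \<Rightarrow> 'a list set"
    and lam :: real and R :: "'a \<Rightarrow> real"
  assumes rs: "random_subst th"
    and sc: "semi_compatible th"
    and prim: "primitive_mat (subst_matrix th)"
    and R_pos: "\<forall>i. R i > 0"
    and R_norm: "(\<Sum>i\<in>UNIV. R i) = 1"
    and R_eig: "\<forall>i. (\<Sum>j\<in>UNIV. real (subst_matrix th i j) * R j) = lam * R i"
  shows "\<forall>\<epsilon>>0. lam > \<epsilon> * real (card (UNIV::'a set)) * real (Max (range (subst_len th))) \<longrightarrow>
     (\<exists>N0. \<forall>N\<ge>N0.
        let K = real (Max (range (subst_len th)));
            lm = lam - \<epsilon> * real (card (UNIV::'a set)) * K;
            lp = lam + \<epsilon> * real (card (UNIV::'a set)) * K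
        in real (card (subst_set th (subst_lang th) \<inter> lang_len th N))
           \<le> real N * (1 / lm - 1 / lp)
             * real (card (lang_len th (nat \<lfloor>real N / lm\<rfloor>)))
             * (\<Prod>i\<in>UNIV. real (card (th i)) powr ((R i + \<epsilon>) * real N / lm)))"
proof -
  interpret PF th R lam
    using rs sc prim R_pos R_norm R_eig by unfold_locales auto
  show ?thesis
  proof (intro allI impI)
    fix \<epsilon> :: real
    assume ep: "\<epsilon> > 0" and lamb: "lam > \<epsilon> * real (card (UNIV::'a set)) * real (Max (range (subst_len th)))"
    show "\<exists>N0. \<forall>N\<ge>N0.
        let K = real (Max (range (subst_len th)));
            lm = lam - \<epsilon> * real (card (UNIV::'a set)) * K;
            lp = lam + \<epsilon> * real (card (UNIV::'a set)) * K
        in real (card (subst_set th (subst_lang th) \<inter> lang_len th N))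
           \<le> real N * (1 / lm - 1 / lp)
             * real (card (lang_len th (nat \<lfloor>real N / lm\<rfloor>)))
             * (\<Prod>i\<in>UNIV. real (card (th i)) powr ((R i + \<epsilon>) * real N / lm))"
      unfolding Let_def by (rule final[OF ep lamb])
  qed
qed

end
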